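(* Let $\{w_k\}$ be generated by the inexact subsampled Newton-CG method $w_{k+1}=w_k+p_k^r$, where $|S_k|=\beta$ for all $k$ and $p_k^r$ is the result of $r<d$ iterations of the conjugate gradient method, started from $p^0=0$, applied to the linear system $\nabla^2R_{S_k}(w_k)p=-\nabla R(w_k)$. Suppose Assumptions A1, A3 and A4 hold (for $R$). Then $$\mathbb{E}_k[\|w_{k+1}-w^*\|]\le C_1\|w_k-w^*\|^2+\left(\frac{C_2}{\sqrt\beta}+C_3\theta^r\right)\|w_k-w^*\|,$$ where $$C_1=\frac{M}{2\mu_\beta},\quad C_2=\frac{\sigma}{\mu_\beta},\quad C_3=\frac{2L}{\mu_\beta}\sqrt{\delta(\beta)},\quad \theta=\frac{\sqrt{\delta(\beta)}-1}{\sqrt{\delta(\beta)}+1},\quad \delta(\beta)=\frac{L_\beta}{\mu_\beta}.$$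
   Context: Setting (finite sum): $R(w)=\frac1N\sum_{i=1}^NF_i(w)$ for $w\in\mathbb{R}^d$, with each $F_i$ twice continuously differentiable. For an index multiset $S\subset\{1,\dots,N\}$, $\nabla^2R_S(w)=\frac1{|S|}\sum_{i\in S}\nabla^2F_i(w)$. At each iteration $S_k$ consists of $\beta$ indices drawn independently and uniformly from $\{1,\dots,N\}$, independent of the past; the full gradient $\nabla R(w_k)$ is used. $\mathbb{E}_k$ is expectation over $S_k$ conditional on $w_k$. $w^*$ is the unique minimizer of $R$. Assumption A1 (for $R$): for every positive integer $\beta$ there are $0<\mu_\beta\le L_\beta$ with $\mu_\beta I\preceq\nabla^2R_S(w)\preceq L_\beta I$ for all $w$ and all $|S|=\beta$; constants $0<\bar\mu\le\mu_\beta$, $L_\beta\le\bar L<\infty$ for all $\beta$; and $\mu I\preceq\nabla^2R(w)\preceq LI$ for all $w$. Assumption A3: $\|\nabla^2R(w)-\nabla^2R(z)\|\le M\|w-z\|$ for all $w,z$. Assumption A4: with $i$ uniform on $\{1,\dots,N\}$, $\|\mathbb{E}[(\nabla^2F_i(w)-\nabla^2R(w))^2]\|\le\sigma^2$ for all $w$. *)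

theory Defs
  imports "HOL-Analysis.Analysis"
begin

definition mnorm :: "real^'n^'n \<Rightarrow> real" where
  "mnorm A = onorm (\<lambda>x. A *v x)"

definition loewner_le :: "real^'n^'n \<Rightarrow> real^'n^'n \<Rightarrow> bool" where
  "loewner_le A B \<longleftrightarrow> (\<forall>x. x \<bullet> (A *v x) \<le> x \<bullet> (B *v x))"

text \<open>Index samples of size beta drawn (with replacement, ordered) from {0..<N};
  uniform iid sampling corresponds to the uniform distribution on this set.\<close>
definition samples :: "nat \<Rightarrow> nat \<Rightarrow> nat list set" where
  "samples N \<beta> = {S. length S = \<beta> \<and> set S \<subseteq> {..<N}}"

definition sample_exp :: "nat \<Rightarrow> nat \<Rightarrow> (nat list \<Rightarrow> real) \<Rightarrow> real" where
  "sample_exp N \<beta> X = (\<Sum>S\<in>samples N \<beta>. X S) / real N ^ \<beta>"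

definition sub_hess :: "(nat \<Rightarrow> real^'n \<Rightarrow> real^'n^'n) \<Rightarrow> nat list \<Rightarrow> real^'n \<Rightarrow> real^'n^'n" where
  "sub_hess H S w = (1 / real (length S)) *\<^sub>R sum_list (map (\<lambda>i. H i w) S)"

text \<open>Conjugate gradient for A p = b started from p0 = 0.
  State: (iterate x_k, residual r_k = b - A x_k, search direction d_k).\<close>
fun cg_state :: "real^'n^'n \<Rightarrow> real^'n \<Rightarrow> nat \<Rightarrow> (real^'n) \<times> (real^'n) \<times> (real^'n)" where
  "cg_state A b 0 = (0, b, b)"
| "cg_state A b (Suc k) =
     (let (x, r, d) = cg_state A b k;
          \<alpha> = (r \<bullet> r) / (d \<bullet> (A *v d));
          x' = x + \<alpha> *\<^sub>R d;
          r' = r - \<alpha> *\<^sub>R (A *v d);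
          \<gamma> = (r' \<bullet> r') / (r \<bullet> r);
          d' = r' + \<gamma> *\<^sub>R d
      in (x', r', d'))"

definition cg :: "real^'n^'n \<Rightarrow> real^'n \<Rightarrow> nat \<Rightarrow> real^'n" where
  "cg A b k = fst (cg_state A b k)"

end

theory Submission
  imports Defs "HOL-Computational_Algebra.Polynomial"
begin

definition symm :: "real^'n^'n \<Rightarrow> bool" where
  "symm A \<longleftrightarrow> (\<forall>x y. x \<bullet> (A *v y) = (A *v x) \<bullet> y)"

definition krylov :: "real^'n^'n \<Rightarrow> real^'n \<Rightarrow> nat \<Rightarrow> (real^'n) set" where
  "krylov A c k = span ((\<lambda>j. ((*v) A ^^ j) c) ` {..<k})"

lemma krylov_mono: "k \<le> m \<Longrightarrow> krylov A c k \<subseteq> krylov A c m"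
  unfolding krylov_def by (intro span_mono image_mono) auto

lemma krylov_Suc_sub: "krylov A c k \<subseteq> krylov A c (Suc k)"
  by (rule krylov_mono) simp

lemma krylov_mult: assumes "y \<in> krylov A c k" shows "A *v y \<in> krylov A c (Suc k)"
proof -
  have "(*v) A ` krylov A c k = span ((*v) A ` ((\<lambda>j. ((*v) A ^^ j) c) ` {..<k}))"
    unfolding krylov_def by (rule span_linear_image[OF matrix_vector_mul_linear, symmetric])
  also have "\<dots> \<subseteq> krylov A c (Suc k)"
    unfolding krylov_def by (intro span_mono) (auto simp: image_iff intro!: bexI[where x="Suc _"])
  finally show ?thesis using assms by auto
qed

lemma krylov_zero[simp]: "krylov A c 0 = {0}"
  unfolding krylov_def by simp

lemma c_in_krylov: "c \<in> krylov A c (Suc k)"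
  unfolding krylov_def by (rule span_base) (auto simp: image_iff intro!: bexI[where x=0])

lemma krylov_split:
  assumes d: "d \<in> krylov A c (Suc k)" "d \<notin> krylov A c k" and y: "y \<in> krylov A c (Suc k)"
  shows "\<exists>t z. z \<in> krylov A c k \<and> y = t *\<^sub>R d + z"
proof -
  let ?u = "((*v) A ^^ k) c"
  have eq: "krylov A c (Suc k) = span (insert ?u ((\<lambda>j. ((*v) A ^^ j) c) ` {..<k}))"
    unfolding krylov_def lessThan_Suc by simp
  have "d \<in> span (insert ?u ((\<lambda>j. ((*v) A ^^ j) c) ` {..<k}))" using d(1) eq by simp
  then obtain s where s: "d - s *\<^sub>R ?u \<in> krylov A c k"
    unfolding span_insert krylov_def by auto
  have "s \<noteq> 0" using s d(2) by auto
  have "y \<in> span (insert ?u ((\<lambda>j. ((*v) A ^^ j) c) ` {..<k}))" using y eq by simp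
  then obtain s' where s': "y - s' *\<^sub>R ?u \<in> krylov A c k"
    unfolding span_insert krylov_def by auto
  have sub: "subspace (krylov A c k)" unfolding krylov_def by simp
  define z where "z = (y - s' *\<^sub>R ?u) - (s'/s) *\<^sub>R (d - s *\<^sub>R ?u)"
  have "z \<in> krylov A c k" unfolding z_def
    by (rule subspace_diff[OF sub s' subspace_scale[OF sub s]])
  moreover have "y = (s'/s) *\<^sub>R d + z" using \<open>s \<noteq> 0\<close>
    by (simp add: z_def algebra_simps)
  ultimately show ?thesis by blast
qed

lemma krylov_subspace[simp]: "subspace (krylov A c k)"
  by (simp add: krylov_def)

lemma cg_inv:
  fixes A :: "real^'n^'n"
  assumes sym: "symm A" and pd: "\<And>x. x \<noteq> 0 \<Longrightarrow> 0 < x \<bullet> (A *v x)"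
  shows "\<exists>x rr d. cg_state A c k = (x, rr, d) \<and> rr = c - A *v x \<and> x \<in> krylov A c k
     \<and> rr \<in> krylov A c (Suc k) \<and> d \<in> krylov A c (Suc k)
     \<and> (\<forall>y\<in>krylov A c k. rr \<bullet> y = 0 \<and> d \<bullet> (A *v y) = 0) \<and> rr \<bullet> d = rr \<bullet> rr"
proof (induction k)
  case 0 show ?case by (auto intro: c_in_krylov)
next
  case (Suc k)
  then obtain x rr d where st: "cg_state A c k = (x,rr,d)" and I1: "rr = c - A *v x"
    and I2x: "x \<in> krylov A c k" and I2r: "rr \<in> krylov A c (Suc k)"
    and I2d: "d \<in> krylov A c (Suc k)"
    and I3: "\<forall>y\<in>krylov A c k. rr \<bullet> y = 0 \<and> d \<bullet> (A *v y) = 0" and I5: "rr \<bullet> d = rr \<bullet> rr"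
    by blast
  define \<alpha> where "\<alpha> = (rr \<bullet> rr) / (d \<bullet> (A *v d))"
  define x' where "x' = x + \<alpha> *\<^sub>R d"
  define r' where "r' = rr - \<alpha> *\<^sub>R (A *v d)"
  define \<gamma> where "\<gamma> = (r' \<bullet> r') / (rr \<bullet> rr)"
  define d' where "d' = r' + \<gamma> *\<^sub>R d"
  have st': "cg_state A c (Suc k) = (x', r', d')" using st
    by (simp add: \<alpha>_def x'_def r'_def \<gamma>_def d'_def Let_def)
  have symA: "\<And>u v. u \<bullet> (A *v v) = (A *v u) \<bullet> v" using sym by (simp add: symm_def)
  have Ksub: "krylov A c k \<subseteq> krylov A c (Suc k)" "krylov A c (Suc k) \<subseteq> krylov A c (Suc (Suc k))"
    by (rule krylov_Suc_sub)+
  have r'eq: "r' = c - A *v x'" using I1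
    by (simp add: r'_def x'_def matrix_vector_right_distrib matrix_vector_mult_scaleR)
  have x'K: "x' \<in> krylov A c (Suc k)" unfolding x'_def
    using I2x I2d Ksub by (intro subspace_add[OF krylov_subspace] subspace_scale[OF krylov_subspace]) auto
  have r'K: "r' \<in> krylov A c (Suc (Suc k))" unfolding r'_def
    using I2r I2d Ksub krylov_mult[OF I2d]
    by (intro subspace_diff[OF krylov_subspace] subspace_scale[OF krylov_subspace]) auto
  have d'K: "d' \<in> krylov A c (Suc (Suc k))" unfolding d'_def
    using r'K I2d Ksub
    by (intro subspace_add[OF krylov_subspace] subspace_scale[OF krylov_subspace]) auto
  show ?case
  proof (cases "rr = 0")
    case True
    then have "x' = x" "r' = 0" "d' = 0" by (auto simp: \<alpha>_def x'_def r'_def \<gamma>_def d'_def)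
    then show ?thesis using st' I1 I2x True Ksub
      by (auto intro: subspace_0[OF krylov_subspace])
  next
    case False
    have rr_pos: "rr \<bullet> rr > 0" using False by simp
    have "d \<noteq> 0" using I5 False by auto
    hence dAd: "d \<bullet> (A *v d) > 0" using pd by auto
    have dnot: "d \<notin> krylov A c k" using I3 dAd by auto
    have \<alpha>d: "\<alpha> * (d \<bullet> (A *v d)) = rr \<bullet> rr" using dAd by (simp add: \<alpha>_def)
    have \<alpha>pos: "\<alpha> > 0" using dAd rr_pos by (simp add: \<alpha>_def)
    have r'd: "r' \<bullet> d = 0"
    proof -
      have "r' \<bullet> d = rr \<bullet> d - \<alpha> * ((A *v d) \<bullet> d)" by (simp add: r'_def inner_diff_left)
      moreover have "(A *v d) \<bullet> d = d \<bullet> (A *v d)" by (rule inner_commute)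
      ultimately show ?thesis using I5 \<alpha>d by simp
    qed
    have r'K1: "\<forall>y\<in>krylov A c (Suc k). r' \<bullet> y = 0"
    proof
      fix y assume y: "y \<in> krylov A c (Suc k)"
      obtain t z where z: "z \<in> krylov A c k" "y = t *\<^sub>R d + z"
        using krylov_split[OF I2d dnot y] by blast
      have "r' \<bullet> z = 0" using I3 z(1)
        by (simp add: r'_def inner_diff_left symA[symmetric])
      then show "r' \<bullet> y = 0" using r'd z(2) by (simp add: inner_add_right)
    qed
    have r'r: "r' \<bullet> rr = 0" using r'K1 I2r by auto
    have r'Ad: "\<alpha> * (r' \<bullet> (A *v d)) = - (r' \<bullet> r')"
    proof -
      have "\<alpha> *\<^sub>R (A *v d) = rr - r'" by (simp add: r'_def)
      hence "r' \<bullet> (\<alpha> *\<^sub>R (A *v d)) = r' \<bullet> rr - r' \<bullet> r'" by (simp add: inner_diff_right)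
      thus ?thesis using r'r by simp
    qed
    have d'Ad: "d' \<bullet> (A *v d) = 0"
    proof -
      have "\<alpha> * (d' \<bullet> (A *v d)) = \<alpha> * (r' \<bullet> (A *v d)) + \<gamma> * (\<alpha> * (d \<bullet> (A *v d)))"
        by (simp add: d'_def inner_add_left algebra_simps)
      also have "\<dots> = 0" using r'Ad \<alpha>d rr_pos by (simp add: \<gamma>_def)
      finally show ?thesis using \<alpha>pos by simp
    qed
    have d'K1: "\<forall>y\<in>krylov A c (Suc k). d' \<bullet> (A *v y) = 0"
    proof
      fix y assume y: "y \<in> krylov A c (Suc k)"
      obtain t z where z: "z \<in> krylov A c k" "y = t *\<^sub>R d + z"
        using krylov_split[OF I2d dnot y] by blast
      have "d' \<bullet> (A *v z) = 0" using I3 z(1) r'K1 krylov_mult[OF z(1)]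
        by (simp add: d'_def inner_add_left)
      then show "d' \<bullet> (A *v y) = 0" using d'Ad z(2)
        by (simp add: matrix_vector_right_distrib matrix_vector_mult_scaleR inner_add_right)
    qed
    have r'd': "r' \<bullet> d' = r' \<bullet> r'" using r'd by (simp add: d'_def inner_add_right)
    show ?thesis using st' r'eq x'K r'K d'K r'K1 d'K1 r'd' by blast
  qed
qed

lemma cg_opt:
  fixes A :: "real^'n^'n"
  assumes sym: "symm A" and pd: "\<And>x. x \<noteq> 0 \<Longrightarrow> 0 < x \<bullet> (A *v x)"
    and xs: "A *v xs = c" and y: "y \<in> krylov A c k"
  shows "(xs - cg A c k) \<bullet> (A *v (xs - cg A c k)) \<le> (xs - y) \<bullet> (A *v (xs - y))"
proof -
  obtain x rr d where st: "cg_state A c k = (x, rr, d)" and I1: "rr = c - A *v x"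
    and Ix: "x \<in> krylov A c k" and I3: "\<forall>y\<in>krylov A c k. rr \<bullet> y = 0"
    using cg_inv[OF sym pd, of c k] by blast
  have cgx: "cg A c k = x" by (simp add: cg_def st)
  have symA: "\<And>u v. u \<bullet> (A *v v) = (A *v u) \<bullet> v" using sym by (simp add: symm_def)
  define e where "e = xs - x"
  define u where "u = x - y"
  have uK: "u \<in> krylov A c k" unfolding u_def using Ix y by (rule subspace_diff[OF krylov_subspace])
  have Ae: "A *v e = rr" using I1 xs by (simp add: e_def matrix_vector_mult_diff_distrib)
  have "rr \<bullet> u = 0" using I3 uK by blast
  hence ur: "u \<bullet> rr = 0" by (metis inner_commute)
  have uu: "0 \<le> u \<bullet> (A *v u)" using pd[of u] by (cases "u = 0") auto
  have "(xs - y) \<bullet> (A *v (xs - y)) = (e + u) \<bullet> (A *v (e + u))"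
    by (simp add: e_def u_def)
  also have "\<dots> = e \<bullet> (A *v e) + 2 * (u \<bullet> (A *v e)) + u \<bullet> (A *v u)"
    by (simp add: matrix_vector_right_distrib inner_add_left inner_add_right symA[of e u] inner_commute[of "A *v e" u])
  also have "\<dots> = e \<bullet> (A *v e) + u \<bullet> (A *v u)" using Ae ur by simp
  finally show ?thesis using uu by (simp add: cgx e_def)
qed

definition pv :: "real poly \<Rightarrow> real^'n^'n \<Rightarrow> real^'n \<Rightarrow> real^'n" where
  "pv p A x = (\<Sum>i\<le>degree p. coeff p i *\<^sub>R ((*v) A ^^ i) x)"

lemma funpow_mv_add: fixes A :: "real^'n^'n" shows "((*v) A ^^ i) (x + y) = ((*v) A ^^ i) x + ((*v) A ^^ i) y"
  by (induction i) (auto simp: matrix_vector_right_distrib)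

lemma funpow_mv_scale: fixes A :: "real^'n^'n" shows "((*v) A ^^ i) (t *\<^sub>R x) = t *\<^sub>R ((*v) A ^^ i) x"
proof (induction i)
  case (Suc i) thus ?case using matrix_vector_mult_scaleR[of A t "((*v) A ^^ i) x"] by simp
qed simp

lemma pv_add: "pv p A (x + y) = pv p A x + pv p A y"
  by (simp add: pv_def funpow_mv_add scaleR_add_right sum.distrib)

lemma pv_scale: "pv p A (t *\<^sub>R x) = t *\<^sub>R pv p A x"
  by (simp add: pv_def funpow_mv_scale scaleR_sum_right mult.commute)

lemma funpow_mv_eigen: "A *v v = l *\<^sub>R v \<Longrightarrow> ((*v) A ^^ i) v = (l ^ i) *\<^sub>R (v::real^'n)"
  by (induction i) (auto simp: matrix_vector_mult_scaleR)

lemma pv_eigen: "A *v v = l *\<^sub>R v \<Longrightarrow> pv p A v = poly p l *\<^sub>R v"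
  by (simp add: pv_def funpow_mv_eigen[of A v l] poly_altdef scaleR_sum_left)

lemma funpow_mv_inv: "subspace S \<Longrightarrow> (\<forall>x\<in>S. A *v x \<in> S) \<Longrightarrow> x \<in> S \<Longrightarrow> ((*v) A ^^ i) x \<in> S"
  by (induction i) auto

lemma pv_inv: "subspace S \<Longrightarrow> (\<forall>x\<in>S. A *v x \<in> S) \<Longrightarrow> x \<in> S \<Longrightarrow> pv p A x \<in> S"
  unfolding pv_def
  by (intro subspace_sum subspace_scale) (auto intro: funpow_mv_inv)

lemma pv_krylov:
  assumes "poly p 0 = 1"
  shows "xs - pv p A xs \<in> krylov A (A *v xs) (degree p)"
proof (cases "degree p")
  case 0
  then have "pv p A xs = xs" using assms by (simp add: pv_def poly_0_coeff_0)
  then show ?thesis by (simp add: subspace_0)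
next
  case (Suc m)
  have c0: "coeff p 0 = 1" using assms by (simp add: poly_0_coeff_0)
  have "pv p A xs = xs + (\<Sum>i\<le>m. coeff p (Suc i) *\<^sub>R ((*v) A ^^ i) (A *v xs))"
    unfolding pv_def Suc sum.atMost_Suc_shift by (simp add: c0 funpow_Suc_right del: funpow.simps)
  hence "xs - pv p A xs = - (\<Sum>i\<le>m. coeff p (Suc i) *\<^sub>R ((*v) A ^^ i) (A *v xs))" by simp
  moreover have "(\<Sum>i\<le>m. coeff p (Suc i) *\<^sub>R ((*v) A ^^ i) (A *v xs)) \<in> krylov A (A *v xs) (degree p)"
    unfolding Suc krylov_def
    by (intro subspace_sum[OF subspace_span] subspace_scale[OF subspace_span] span_base) auto
  ultimately show ?thesis by (simp add: subspace_neg)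
qed

lemma small_pos_contra:
  fixes m K :: real
  assumes "m \<ge> 0" and "\<And>t. t > 0 \<Longrightarrow> 2*t*m + t^2*K \<le> 0"
  shows "m = 0"
proof (rule ccontr)
  assume "m \<noteq> 0" hence mp: "m > 0" using assms by simp
  define t where "t = m / (\<bar>K\<bar> + 1)"
  have tp: "t > 0" using mp by (simp add: t_def)
  have "t * \<bar>K\<bar> \<le> m" using mp by (simp add: t_def field_simps)
  hence "t^2 * \<bar>K\<bar> \<le> t * m" using tp by (simp add: power2_eq_square mult.assoc mult_left_mono)
  moreover have "- (t^2 * \<bar>K\<bar>) \<le> t^2*K"
    using mult_left_mono[of "-\<bar>K\<bar>" K "t^2"] by simp
  ultimately have "2*t*m + t^2*K \<ge> t*m" by linarith
  moreover have "t*m > 0" using tp mp by simp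
  ultimately show False using assms(2)[OF tp] by linarith
qed

lemma quad_scale: "(c *\<^sub>R x) \<bullet> (A *v (c *\<^sub>R x)) = c^2 * (x \<bullet> (A *v (x::real^'n)))"
  by (simp add: matrix_vector_mult_scaleR power2_eq_square)

lemma eigen_exists:
  fixes A :: "real^'n^'n"
  assumes sym: "symm A" and S: "subspace S" and inv: "\<forall>x\<in>S. A *v x \<in> S" and ne: "S \<noteq> {0}"
  shows "\<exists>v\<in>S. norm v = 1 \<and> A *v v = (v \<bullet> (A *v v)) *\<^sub>R v"
proof -
  have symA: "\<And>u v. u \<bullet> (A *v v) = (A *v u) \<bullet> v" using sym by (simp add: symm_def)
  define T where "T = S \<inter> sphere 0 1"
  have cT: "compact T" unfolding T_def using closed_subspace[OF S] compact_sphere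
    by (metis compact_Int_closed inf_commute)
  obtain u where u: "u \<in> S" "u \<noteq> 0" using ne subspace_0[OF S] by blast
  have "(1 / norm u) *\<^sub>R u \<in> T" unfolding T_def using u S by (auto intro: subspace_scale)
  hence neT: "T \<noteq> {}" by blast
  have cont: "continuous_on T (\<lambda>x. x \<bullet> (A *v x))"
    by (intro continuous_intros)
  obtain v where vT: "v \<in> T" and vmax: "\<forall>y\<in>T. y \<bullet> (A *v y) \<le> v \<bullet> (A *v v)"
    using continuous_attains_sup[OF cT neT cont] by blast
  define l where "l = v \<bullet> (A *v v)"
  have vS: "v \<in> S" and nv: "norm v = 1" using vT by (auto simp: T_def)
  have vv: "v \<bullet> v = 1" using nv by (simp add: dot_square_norm)
  have ray: "x \<bullet> (A *v x) \<le> l * (x \<bullet> x)" if x: "x \<in> S" for x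
  proof (cases "x = 0")
    case False
    have "(1 / norm x) *\<^sub>R x \<in> T" unfolding T_def using x False S by (auto intro: subspace_scale)
    hence "((1 / norm x) *\<^sub>R x) \<bullet> (A *v ((1 / norm x) *\<^sub>R x)) \<le> l" using vmax unfolding l_def by blast
    hence "(1/norm x)^2 * (x \<bullet> (A *v x)) \<le> l" by (simp only: quad_scale)
    hence "(x \<bullet> (A *v x)) \<le> l * (norm x)^2" using False by (simp add: field_simps)
    thus ?thesis by (simp add: dot_square_norm)
  qed simp
  define w where "w = A *v v - l *\<^sub>R v"
  have wS: "w \<in> S" unfolding w_def using vS inv S by (auto intro: subspace_diff subspace_scale)
  have vw: "v \<bullet> w = 0" by (simp add: w_def inner_diff_right vv l_def)
  have wAv: "w \<bullet> (A *v v) = w \<bullet> w"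
  proof -
    have "A *v v = w + l *\<^sub>R v" by (simp add: w_def)
    hence "w \<bullet> (A *v v) = w \<bullet> w + l * (w \<bullet> v)" by (simp add: inner_add_right)
    thus ?thesis using vw by (simp add: inner_commute)
  qed
  have "w \<bullet> w = 0"
  proof (rule small_pos_contra[where K = "w \<bullet> (A *v w) - l * (w \<bullet> w)"])
    show "0 \<le> w \<bullet> w" by simp
    fix t :: real assume "t > 0"
    have xS: "v + t *\<^sub>R w \<in> S" using vS wS S by (auto intro: subspace_add subspace_scale)
    have h1: "v \<bullet> (A *v w) = w \<bullet> w" using symA[of v w] wAv by (simp add: inner_commute)
    have h2: "(A *v w) \<bullet> v = w \<bullet> w" using h1 by (simp add: inner_commute)
    have "(v + t *\<^sub>R w) \<bullet> (A *v (v + t *\<^sub>R w)) = l + 2 * t * (w \<bullet> w) + t^2 * (w \<bullet> (A *v w))"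
      by (simp add: h1 h2 matrix_vector_right_distrib matrix_vector_mult_scaleR inner_add_left inner_add_right
          l_def symA[of w v] wAv power2_eq_square algebra_simps inner_commute[of "A *v v" w])
    moreover have "(v + t *\<^sub>R w) \<bullet> (v + t *\<^sub>R w) = 1 + t^2 * (w \<bullet> w)"
      using vv vw by (simp add: inner_add_left inner_add_right power2_eq_square inner_commute[of w v])
    ultimately show "2 * t * (w \<bullet> w) + t^2 * (w \<bullet> (A *v w) - l * (w \<bullet> w)) \<le> 0"
      using ray[OF xS] by (simp add: algebra_simps)
  qed
  hence "w = 0" by simp
  hence "A *v v = l *\<^sub>R v" by (simp add: w_def)
  thus ?thesis using vS nv by (auto simp: l_def)
qed

lemma pv_zero[simp]: "pv p A 0 = 0"
  using pv_scale[of p A 0 0] by simp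

lemma pv_bound:
  fixes A :: "real^'n^'n"
  assumes sym: "symm A" and lo: "\<And>x. a*(x \<bullet> x) \<le> x \<bullet> (A *v x)" and hi: "\<And>x. x \<bullet> (A *v x) \<le> b*(x \<bullet> x)"
    and a: "0 \<le> a" and pb: "\<And>l. a \<le> l \<Longrightarrow> l \<le> b \<Longrightarrow> \<bar>poly p l\<bar> \<le> C"
  shows "subspace S \<Longrightarrow> (\<forall>x\<in>S. A *v x \<in> S) \<Longrightarrow> x \<in> S
     \<Longrightarrow> (pv p A x) \<bullet> (A *v pv p A x) \<le> C^2 * (x \<bullet> (A *v x))"
proof (induction "dim S" arbitrary: S x rule: less_induct)
  case less
  have symA: "\<And>u v. u \<bullet> (A *v v) = (A *v u) \<bullet> v" using sym by (simp add: symm_def)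
  show ?case
  proof (cases "S = {0}")
    case True
    then show ?thesis using less.prems by simp
  next
    case False
    obtain v where vS: "v \<in> S" and nv: "norm v = 1" and ev: "A *v v = (v \<bullet> (A *v v)) *\<^sub>R v"
      using eigen_exists[OF sym less.prems(1) less.prems(2) False] by blast
    define l where "l = v \<bullet> (A *v v)"
    have vv: "v \<bullet> v = 1" using nv by (simp add: dot_square_norm)
    have ev': "A *v v = l *\<^sub>R v" using ev by (simp add: l_def)
    have la: "a \<le> l" using lo[of v] vv by (simp add: l_def)
    have lb: "l \<le> b" using hi[of v] vv by (simp add: l_def)
    have l0: "0 \<le> l" using a la by simp
    define S' where "S' = S \<inter> {z. orthogonal v z}"
    have subS': "subspace S'" unfolding S'_def
      by (intro subspace_inter less.prems(1) subspace_orthogonal_to_vector)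
    have vz: "z \<in> S' \<Longrightarrow> v \<bullet> z = 0" for z by (simp add: S'_def orthogonal_def)
    have vAz: "z \<in> S' \<Longrightarrow> v \<bullet> (A *v z) = 0" for z
      using symA[of v z] ev' vz[of z] by simp
    have invS': "\<forall>x\<in>S'. A *v x \<in> S'"
      using less.prems(2) vAz by (auto simp: S'_def orthogonal_def)
    have "S' \<subseteq> S" by (auto simp: S'_def)
    moreover have "v \<notin> S'" using vv by (auto simp: S'_def orthogonal_def)
    ultimately have "S' \<subset> S" using vS by blast
    hence dimlt: "dim S' < dim S"
      using subS' less.prems(1) dim_psubset[of S' S] by (simp add: span_eq_iff[THEN iffD2])
    have Qsplit: "(t *\<^sub>R v + w) \<bullet> (A *v (t *\<^sub>R v + w)) = t^2 * l + w \<bullet> (A *v w)"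
      if w: "w \<in> S'" for t w
    proof -
      have "w \<bullet> (A *v v) = 0" using vz[OF w] ev' by (simp add: inner_commute)
      moreover have "w \<bullet> v = 0" using vz[OF w] by (simp add: inner_commute)
      moreover have "v \<bullet> (A *v w) = 0" using vAz[OF w] .
      ultimately show ?thesis using ev' vv
        by (simp add: matrix_vector_right_distrib matrix_vector_mult_scaleR inner_add_left
            inner_add_right power2_eq_square algebra_simps)
    qed
    define z where "z = x - (v \<bullet> x) *\<^sub>R v"
    have zS': "z \<in> S'" unfolding S'_def z_def using less.prems vS vv
      by (auto intro!: subspace_diff subspace_scale simp: orthogonal_def inner_diff_right)
    have xdec: "x = (v \<bullet> x) *\<^sub>R v + z" by (simp add: z_def)
    have pvx: "pv p A x = ((v \<bullet> x) * poly p l) *\<^sub>R v + pv p A z"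
      by (subst xdec) (simp add: pv_add pv_scale pv_eigen[OF ev'])
    have pvz: "pv p A z \<in> S'" using pv_inv[OF subS' invS' zS'] .
    have IH: "(pv p A z) \<bullet> (A *v pv p A z) \<le> C^2 * (z \<bullet> (A *v z))"
      using less.hyps[OF dimlt subS' invS' zS'] .
    have pl: "(poly p l)^2 \<le> C^2" using pb[OF la lb]
      by (metis abs_ge_zero abs_le_square_iff power2_abs order_trans abs_ge_self power_mono)
    have "(pv p A x) \<bullet> (A *v pv p A x) = ((v \<bullet> x) * poly p l)^2 * l + (pv p A z) \<bullet> (A *v pv p A z)"
      unfolding pvx using Qsplit[OF pvz] .
    also have "\<dots> \<le> C^2 * ((v \<bullet> x)^2 * l) + C^2 * (z \<bullet> (A *v z))"
    proof -
      have "((v \<bullet> x) * poly p l)^2 * l = (v \<bullet> x)^2 * l * (poly p l)^2" by (simp add: power_mult_distrib)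
      also have "\<dots> \<le> (v \<bullet> x)^2 * l * C^2" using pl l0 by (intro mult_left_mono) auto
      finally show ?thesis using IH by (simp add: algebra_simps)
    qed
    also have "\<dots> = C^2 * (x \<bullet> (A *v x))"
      by (subst (2 3) xdec, subst Qsplit[OF zS']) (simp add: algebra_simps)
    finally show ?thesis .
  qed
qed

fun cheb :: "nat \<Rightarrow> real poly" where
  "cheb 0 = 1"
| "cheb (Suc 0) = [:0,1:]"
| "cheb (Suc (Suc n)) = [:0,2:] * cheb (Suc n) - cheb n"

lemma cheb_degree: "degree (cheb n) \<le> n"
proof (induction n rule: cheb.induct)
  case (3 n)
  have "degree ([:0,2:] * cheb (Suc n)) \<le> degree [:0::real,2:] + degree (cheb (Suc n))"
    by (rule degree_mult_le)
  also have "\<dots> \<le> Suc (Suc n)" using 3(1) by simp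
  finally have h1: "degree ([:0,2:] * cheb (Suc n)) \<le> Suc (Suc n)" .
  have h2: "degree (cheb n) \<le> Suc (Suc n)" using 3(2) by simp
  show ?case unfolding cheb.simps by (rule degree_diff_le[OF h1 h2])
qed auto

lemma cheb_cos: "poly (cheb n) (cos t) = cos (real n * t)"
proof (induction n rule: cheb.induct)
  case (3 n)
  define X where "X = real (Suc n) * t"
  have e1: "real (Suc (Suc n)) * t = X + t" and e2: "real n * t = X - t"
    by (simp_all add: X_def algebra_simps)
  have key: "cos (X + t) = 2 * cos t * cos X - cos (X - t)" by (simp add: cos_add cos_diff)
  have "poly (cheb (Suc (Suc n))) (cos t) = 2 * cos t * poly (cheb (Suc n)) (cos t) - poly (cheb n) (cos t)"
    by simp
  also have "\<dots> = 2 * cos t * cos X - cos (X - t)" using 3(1) 3(2) unfolding e2 by (simp only: X_def)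
  finally show ?case using key e1 by simp
qed auto

lemma cheb_rho:
  assumes "\<rho> \<noteq> 0"
  shows "poly (cheb n) ((\<rho> + inverse \<rho>)/2) = (\<rho>^n + inverse \<rho>^n)/2"
proof (induction n rule: cheb.induct)
  case (3 n)
  define u where "u = inverse \<rho>"
  have ru: "\<rho> * u = 1" using assms by (simp add: u_def)
  have a1: "\<rho> * u^(Suc n) = u^n" using ru by (simp add: mult.assoc[symmetric])
  have a2: "u * \<rho>^(Suc n) = \<rho>^n" using ru by (simp add: mult.assoc[symmetric] mult.commute[of u])
  have "poly (cheb (Suc (Suc n))) ((\<rho> + u)/2) = 2 * ((\<rho> + u)/2) * poly (cheb (Suc n)) ((\<rho> + u)/2) - poly (cheb n) ((\<rho> + u)/2)"
    by simp
  also have "\<dots> = (\<rho> + u) * ((\<rho>^(Suc n) + u^(Suc n))/2) - (\<rho>^n + u^n)/2"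
    using 3(1) 3(2) unfolding u_def by (simp only:)
  also have "\<dots> = (\<rho>^(Suc (Suc n)) + u^(Suc (Suc n)) + \<rho> * u^(Suc n) + u * \<rho>^(Suc n) - \<rho>^n - u^n)/2"
    by (simp add: power_Suc field_simps)
  also have "\<dots> = (\<rho>^(Suc (Suc n)) + u^(Suc (Suc n)))/2" unfolding a1 a2 by simp
  finally show ?case by (simp add: u_def power_inverse)
qed auto

lemma cheb_bound: "\<bar>z\<bar> \<le> 1 \<Longrightarrow> \<bar>poly (cheb n) z\<bar> \<le> 1"
  using cheb_cos[of n "arccos z"] cos_arccos[of z] by (simp add: abs_le_iff)

lemma poly_exists:
  fixes a b :: real assumes a0: "0 < a" and ab: "a \<le> b"
  shows "\<exists>p. poly p 0 = 1 \<and> degree p \<le> r \<and>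
    (\<forall>l. a \<le> l \<and> l \<le> b \<longrightarrow> \<bar>poly p l\<bar> \<le> 2 * ((sqrt (b/a) - 1)/(sqrt (b/a) + 1))^r)"
proof (cases "a = b")
  case True
  then have th: "(sqrt (b/a) - 1)/(sqrt (b/a) + 1) = 0" using a0 by simp
  show ?thesis
  proof (cases "r = 0")
    case True
    then show ?thesis by (intro exI[of _ 1]) simp
  next
    case False
    show ?thesis using \<open>a = b\<close> a0 False th
      by (intro exI[of _ "[:1, -1/a:]"]) auto
  qed
next
  case False
  hence ab': "a < b" using ab by simp
  define s where "s = sqrt (b/a)"
  have s2: "s^2 = b/a" using a0 ab by (simp add: s_def)
  have s1: "s > 1" using a0 ab' by (simp add: s_def)
  define \<rho> where "\<rho> = (s+1)/(s-1)"
  have \<rho>1: "\<rho> > 1" using s1 by (simp add: \<rho>_def)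
  have bsa: "b = s^2 * a" using s2 a0 by simp
  have ss: "1 < s * s" using s1 less_1_mult by blast
  have z0: "(\<rho> + inverse \<rho>)/2 = (b+a)/(b-a)"
    using s1 a0 ss unfolding bsa \<rho>_def by (simp add: field_simps power2_eq_square)
  define q where "q = [:(b+a)/(b-a), -2/(b-a):]"
  define T0 where "T0 = (\<rho>^r + inverse \<rho>^r)/2"
  have T0: "poly (cheb r) ((b+a)/(b-a)) = T0" using cheb_rho[of \<rho> r] \<rho>1 z0 by (simp add: T0_def)
  have T0pos: "T0 \<ge> \<rho>^r / 2" using \<rho>1 by (simp add: T0_def)
  have \<rho>rpos: "\<rho>^r > 0" using \<rho>1 by simp
  define p where "p = smult (1/T0) (pcompose (cheb r) q)"
  have "poly p 0 = 1" using T0 T0pos \<rho>rpos by (simp add: p_def poly_pcompose q_def)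
  moreover have "degree p \<le> r"
  proof -
    have "degree p \<le> degree (pcompose (cheb r) q)" by (simp add: p_def)
    also have "\<dots> = degree (cheb r) * degree q" by (rule degree_pcompose)
    also have "\<dots> \<le> r * 1" using cheb_degree[of r] by (intro mult_mono) (auto simp: q_def)
    finally show ?thesis by simp
  qed
  moreover have "\<bar>poly p l\<bar> \<le> 2 * ((sqrt (b/a) - 1)/(sqrt (b/a) + 1))^r" if l: "a \<le> l" "l \<le> b" for l
  proof -
    have "poly q l = (b+a)/(b-a) - 2*l/(b-a)" by (simp add: q_def)
    also have "\<dots> = ((b+a) - 2*l)/(b-a)" by (simp add: diff_divide_distrib)
    finally have "poly q l = ((b+a) - 2*l)/(b-a)" .
    moreover have "\<bar>((b+a) - 2*l)/(b-a)\<bar> \<le> 1" using l ab' by (simp add: abs_le_iff field_simps)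
    ultimately have c1: "\<bar>poly (cheb r) (poly q l)\<bar> \<le> 1" using cheb_bound by simp
    have "\<bar>poly p l\<bar> = \<bar>poly (cheb r) (poly q l)\<bar> / T0" using T0pos \<rho>rpos
      by (simp add: p_def poly_pcompose abs_mult)
    also have "\<dots> \<le> 1 / T0" using c1 T0pos \<rho>rpos by (intro divide_right_mono) auto
    also have "\<dots> \<le> 1 / (\<rho>^r/2)" using T0pos \<rho>rpos by (intro divide_left_mono) auto
    also have "\<dots> = 2 * (inverse \<rho>)^r" by (simp add: power_inverse field_simps)
    also have "inverse \<rho> = (sqrt (b/a) - 1)/(sqrt (b/a) + 1)" by (simp add: \<rho>_def s_def)
    finally show ?thesis .
  qed
  ultimately show ?thesis by blast
qed

lemma cg_bound:
  fixes A :: "real^'n^'n"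
  assumes sym: "symm A" and lo: "\<And>x. a*(x \<bullet> x) \<le> x \<bullet> (A *v x)" and hi: "\<And>x. x \<bullet> (A *v x) \<le> b*(x \<bullet> x)"
    and a0: "0 < a" and ab: "a \<le> b"
  shows "norm (cg A (A *v xs) r - xs) \<le> 2 * sqrt (b/a) * ((sqrt (b/a) - 1)/(sqrt (b/a) + 1))^r * norm xs"
proof -
  define \<theta> where "\<theta> = (sqrt (b/a) - 1)/(sqrt (b/a) + 1)"
  have sba: "1 \<le> sqrt (b/a)" using a0 ab by simp
  have \<theta>0: "0 \<le> \<theta>" using sba by (simp add: \<theta>_def)
  obtain p where p0: "poly p 0 = 1" and pdeg: "degree p \<le> r"
    and pb: "\<And>l. a \<le> l \<Longrightarrow> l \<le> b \<Longrightarrow> \<bar>poly p l\<bar> \<le> 2 * \<theta>^r"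
    using poly_exists[OF a0 ab, of r] unfolding \<theta>_def by blast
  define C where "C = 2 * \<theta>^r"
  have C0: "0 \<le> C" using \<theta>0 by (simp add: C_def)
  have pd: "\<And>x. x \<noteq> 0 \<Longrightarrow> 0 < x \<bullet> (A *v x)"
  proof -
    fix x :: "real^'n" assume "x \<noteq> 0"
    hence "0 < a * (x \<bullet> x)" using a0 by simp
    thus "0 < x \<bullet> (A *v x)" using lo[of x] by linarith
  qed
  define e where "e = xs - cg A (A *v xs) r"
  have yK: "xs - pv p A xs \<in> krylov A (A *v xs) r"
    using pv_krylov[OF p0, of xs A] krylov_mono[OF pdeg] by blast
  have "e \<bullet> (A *v e) \<le> (xs - (xs - pv p A xs)) \<bullet> (A *v (xs - (xs - pv p A xs)))"
    unfolding e_def by (rule cg_opt[OF sym pd refl yK])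
  also have "\<dots> = (pv p A xs) \<bullet> (A *v pv p A xs)" by simp
  also have "\<dots> \<le> C^2 * (xs \<bullet> (A *v xs))"
    using pv_bound[OF sym lo hi less_imp_le[OF a0], of p C UNIV xs] pb by (simp add: C_def)
  also have "\<dots> \<le> C^2 * (b * (xs \<bullet> xs))" using hi[of xs] by (intro mult_left_mono) auto
  finally have "a * (e \<bullet> e) \<le> C^2 * (b * (xs \<bullet> xs))" using lo[of e] by linarith
  hence "(norm e)^2 \<le> (C^2 * (b/a)) * (norm xs)^2" using a0
    by (simp add: dot_square_norm field_simps)
  hence "sqrt ((norm e)^2) \<le> sqrt ((C^2 * (b/a)) * (norm xs)^2)" by (rule real_sqrt_le_mono)
  moreover have "(C^2 * (b/a)) * (norm xs)^2 = (C * sqrt (b/a) * norm xs)^2"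
    using a0 ab by (simp add: power_mult_distrib)
  moreover have "0 \<le> C * sqrt (b/a) * norm xs" using C0 a0 ab by simp
  ultimately have "norm e \<le> C * sqrt (b/a) * norm xs" by simp
  thus ?thesis by (simp add: e_def norm_minus_commute C_def \<theta>_def algebra_simps)
qed

lemma line_deriv_F:
  fixes F :: "real^'n \<Rightarrow> real"
  assumes dF: "\<And>v. (F has_derivative (\<lambda>h. g v \<bullet> h)) (at v)"
  shows "((\<lambda>\<sigma>. F (p + \<sigma> *\<^sub>R a)) has_real_derivative (g (p + \<sigma> *\<^sub>R a) \<bullet> a)) (at \<sigma>)"
proof -
  have l: "((\<lambda>\<sigma>. p + \<sigma> *\<^sub>R a) has_derivative (\<lambda>h. h *\<^sub>R a)) (at \<sigma>)"
    by (auto intro!: derivative_eq_intros)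
  have "((\<lambda>\<sigma>. F (p + \<sigma> *\<^sub>R a)) has_derivative (\<lambda>h. g (p + \<sigma> *\<^sub>R a) \<bullet> (h *\<^sub>R a))) (at \<sigma>)"
    by (rule has_derivative_compose[OF l dF])
  thus ?thesis unfolding has_field_derivative_def
    by (rule has_derivative_eq_rhs) (simp add: fun_eq_iff mult.commute)
qed

lemma line_deriv_g:
  fixes g :: "real^'n \<Rightarrow> real^'n"
  assumes dg: "\<And>v. (g has_derivative (\<lambda>h. H v *v h)) (at v)"
  shows "((\<lambda>\<tau>. g (p + \<tau> *\<^sub>R b) \<bullet> a) has_real_derivative ((H (p + \<tau> *\<^sub>R b) *v b) \<bullet> a)) (at \<tau>)"
proof -
  have l: "((\<lambda>\<sigma>. p + \<sigma> *\<^sub>R b) has_derivative (\<lambda>h. h *\<^sub>R b)) (at \<tau>)"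
    by (auto intro!: derivative_eq_intros)
  have "((\<lambda>\<sigma>. g (p + \<sigma> *\<^sub>R b)) has_derivative (\<lambda>h. H (p + \<tau> *\<^sub>R b) *v (h *\<^sub>R b))) (at \<tau>)"
    by (rule has_derivative_compose[OF l dg])
  from has_derivative_inner[OF this has_derivative_const[of a]]
  have "((\<lambda>\<sigma>. g (p + \<sigma> *\<^sub>R b) \<bullet> a) has_derivative (\<lambda>h. (H (p + \<tau> *\<^sub>R b) *v (h *\<^sub>R b)) \<bullet> a)) (at \<tau>)"
    by simp
  thus ?thesis unfolding has_field_derivative_def
    by (rule has_derivative_eq_rhs) (simp add: fun_eq_iff matrix_vector_mult_scaleR)
qed

lemma mixed_mvt:
  fixes F :: "real^'n \<Rightarrow> real"
  assumes dF: "\<And>v. (F has_derivative (\<lambda>h. g v \<bullet> h)) (at v)"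
    and dg: "\<And>v. (g has_derivative (\<lambda>h. H v *v h)) (at v)"
    and e: "0 < e"
  shows "\<exists>p. norm (p - v) \<le> e * (norm a + norm b) \<and>
    F (v + e *\<^sub>R a + e *\<^sub>R b) - F (v + e *\<^sub>R a) - F (v + e *\<^sub>R b) + F v = e^2 * ((H p *v b) \<bullet> a)"
proof -
  define h where "h = (\<lambda>\<sigma>. F ((v + e *\<^sub>R b) + \<sigma> *\<^sub>R a) - F (v + \<sigma> *\<^sub>R a))"
  have hd: "(h has_real_derivative (g ((v + e *\<^sub>R b) + \<sigma> *\<^sub>R a) \<bullet> a - g (v + \<sigma> *\<^sub>R a) \<bullet> a)) (at \<sigma>)" for \<sigma>
    unfolding h_def by (intro DERIV_diff line_deriv_F[OF dF])
  obtain s1 where s1: "0 < s1" "s1 < e"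
    and hs: "h e - h 0 = (e - 0) * (g ((v + e *\<^sub>R b) + s1 *\<^sub>R a) \<bullet> a - g (v + s1 *\<^sub>R a) \<bullet> a)"
    using MVT2[OF e, of h "\<lambda>\<sigma>. g ((v + e *\<^sub>R b) + \<sigma> *\<^sub>R a) \<bullet> a - g (v + \<sigma> *\<^sub>R a) \<bullet> a"] hd by blast
  define k where "k = (\<lambda>\<tau>. g ((v + s1 *\<^sub>R a) + \<tau> *\<^sub>R b) \<bullet> a)"
  have kd: "(k has_real_derivative ((H ((v + s1 *\<^sub>R a) + \<tau> *\<^sub>R b) *v b) \<bullet> a)) (at \<tau>)" for \<tau>
    unfolding k_def by (rule line_deriv_g[OF dg])
  obtain t1 where t1: "0 < t1" "t1 < e"
    and ks: "k e - k 0 = (e - 0) * ((H ((v + s1 *\<^sub>R a) + t1 *\<^sub>R b) *v b) \<bullet> a)"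
    using MVT2[OF e, of k "\<lambda>\<tau>. (H ((v + s1 *\<^sub>R a) + \<tau> *\<^sub>R b) *v b) \<bullet> a"] kd by blast
  define p where "p = (v + s1 *\<^sub>R a) + t1 *\<^sub>R b"
  have "norm (p - v) \<le> norm (s1 *\<^sub>R a) + norm (t1 *\<^sub>R b)"
    unfolding p_def using norm_triangle_ineq[of "s1 *\<^sub>R a" "t1 *\<^sub>R b"] by simp
  also have "\<dots> \<le> e * norm a + e * norm b" using s1 t1
    by (intro add_mono) (auto intro: mult_right_mono)
  finally have pn: "norm (p - v) \<le> e * (norm a + norm b)" by (simp add: algebra_simps)
  have "F (v + e *\<^sub>R a + e *\<^sub>R b) - F (v + e *\<^sub>R a) - F (v + e *\<^sub>R b) + F v = h e - h 0"
    by (simp add: h_def algebra_simps)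
  also have "\<dots> = e * (k e - k 0)" using hs by (simp add: k_def algebra_simps)
  also have "\<dots> = e^2 * ((H p *v b) \<bullet> a)" using ks by (simp add: p_def power2_eq_square)
  finally show ?thesis using pn by blast
qed

lemma cont_bilin_H:
  fixes H :: "real^'n \<Rightarrow> real^'n^'n"
  assumes cH: "continuous_on UNIV H"
  shows "isCont (\<lambda>p. (H p *v b) \<bullet> a) v"
proof -
  have lin: "linear (\<lambda>M::real^'n^'n. (M *v b) \<bullet> a)"
  proof (rule linearI)
    fix M N :: "real^'n^'n" and c :: real
    show "((M + N) *v b) \<bullet> a = (M *v b) \<bullet> a + (N *v b) \<bullet> a"
      by (simp add: matrix_vector_mult_add_rdistrib inner_add_left)
    show "((c *\<^sub>R M) *v b) \<bullet> a = c *\<^sub>R ((M *v b) \<bullet> a)"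
      by (simp add: scaleR_matrix_vector_assoc[symmetric])
  qed
  have "isCont H v" using cH by (simp add: continuous_on_eq_continuous_at)
  moreover have "isCont (\<lambda>M::real^'n^'n. (M *v b) \<bullet> a) (H v)"
    using lin by (intro linear_continuous_at) (simp add: linear_conv_bounded_linear)
  ultimately show ?thesis by (rule isCont_o2)
qed

lemma hess_symm:
  fixes F :: "real^'n \<Rightarrow> real"
  assumes dF: "\<And>v. (F has_derivative (\<lambda>h. g v \<bullet> h)) (at v)"
    and dg: "\<And>v. (g has_derivative (\<lambda>h. H v *v h)) (at v)"
    and cH: "continuous_on UNIV H"
  shows "(H v *v b) \<bullet> a = (H v *v a) \<bullet> b"
proof (rule ccontr)
  define q1 where "q1 = (\<lambda>p. (H p *v b) \<bullet> a)"
  define q2 where "q2 = (\<lambda>p. (H p *v a) \<bullet> b)"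
  assume "(H v *v b) \<bullet> a \<noteq> (H v *v a) \<bullet> b"
  hence D: "0 < \<bar>q1 v - q2 v\<bar>" by (simp add: q1_def q2_def)
  define \<epsilon> where "\<epsilon> = \<bar>q1 v - q2 v\<bar> / 2"
  have \<epsilon>: "0 < \<epsilon>" using D by (simp add: \<epsilon>_def)
  have "isCont q1 v" unfolding q1_def by (rule cont_bilin_H[OF cH])
  hence "\<forall>e>0. \<exists>d>0. \<forall>x'. dist x' v < d \<longrightarrow> dist (q1 x') (q1 v) < e"
    by (simp only: continuous_at_eps_delta)
  then obtain d1 where d1: "d1 > 0" "\<And>p. dist p v < d1 \<Longrightarrow> dist (q1 p) (q1 v) < \<epsilon>"
    using \<epsilon> by blast
  have "isCont q2 v" unfolding q2_def by (rule cont_bilin_H[OF cH])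
  hence "\<forall>e>0. \<exists>d>0. \<forall>x'. dist x' v < d \<longrightarrow> dist (q2 x') (q2 v) < e"
    by (simp only: continuous_at_eps_delta)
  then obtain d2 where d2: "d2 > 0" "\<And>p. dist p v < d2 \<Longrightarrow> dist (q2 p) (q2 v) < \<epsilon>"
    using \<epsilon> by blast
  define e where "e = min d1 d2 / (2 * (norm a + norm b + 1))"
  have pos: "0 < 2 * (norm a + norm b + 1)" by (simp add: add_pos_nonneg add_nonneg_pos)
  have e: "0 < e" using d1 d2 pos unfolding e_def by (intro divide_pos_pos) auto
  have small: "e * (norm a + norm b) < min d1 d2"
  proof -
    have "e * (norm a + norm b) \<le> e * (norm a + norm b + 1)" using e by simp
    also have "\<dots> = min d1 d2 / 2" using pos unfolding e_def by (simp add: field_simps)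
    also have "\<dots> < min d1 d2" using d1(1) d2(1) by (simp add: min_def)
    finally show ?thesis .
  qed
  obtain p1 where p1: "norm (p1 - v) \<le> e * (norm a + norm b)"
    and f1: "F (v + e *\<^sub>R a + e *\<^sub>R b) - F (v + e *\<^sub>R a) - F (v + e *\<^sub>R b) + F v = e^2 * q1 p1"
    using mixed_mvt[OF dF dg e, of v a b] unfolding q1_def by blast
  obtain p2 where p2: "norm (p2 - v) \<le> e * (norm b + norm a)"
    and f2: "F (v + e *\<^sub>R b + e *\<^sub>R a) - F (v + e *\<^sub>R b) - F (v + e *\<^sub>R a) + F v = e^2 * q2 p2"
    using mixed_mvt[OF dF dg e, of v b a] unfolding q2_def by blast
  have "v + e *\<^sub>R b + e *\<^sub>R a = v + e *\<^sub>R a + e *\<^sub>R b" by (simp add: algebra_simps)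
  hence "e^2 * q1 p1 = e^2 * q2 p2" using f1 f2 by (metis add_diff_eq diff_add_eq diff_diff_eq add.commute)
  hence eq: "q1 p1 = q2 p2" using e by simp
  have "dist p1 v < d1" using p1 small by (simp add: dist_norm)
  hence c1: "\<bar>q1 p1 - q1 v\<bar> < \<epsilon>" using d1(2) by (simp add: dist_real_def)
  have "dist p2 v < d2" using p2 small by (simp add: dist_norm add.commute)
  hence c2: "\<bar>q2 p2 - q2 v\<bar> < \<epsilon>" using d2(2) by (simp add: dist_real_def)
  have "\<bar>q1 v - q2 v\<bar> < 2 * \<epsilon>" using c1 c2 eq by linarith
  thus False by (simp add: \<epsilon>_def)
qed

lemma quad_nonneg_cs:
  fixes A B C :: real
  assumes C: "0 \<le> C" and q: "\<And>t. 0 \<le> A + 2*t*B + t^2*C"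
  shows "B^2 \<le> A*C"
proof (cases "C = 0")
  case True
  have "B = 0"
  proof (rule ccontr)
    assume "B \<noteq> 0"
    have "0 \<le> A + 2*(-(A+1)/(2*B))*B" using q[of "-(A+1)/(2*B)"] True by simp
    also have "\<dots> = -1" using \<open>B \<noteq> 0\<close> by (simp add: field_simps)
    finally show False by simp
  qed
  thus ?thesis using True by simp
next
  case False
  hence Cp: "C > 0" using C by simp
  have "0 \<le> A + 2*(-B/C)*B + (-B/C)^2*C" by (rule q)
  also have "\<dots> = A - B^2/C" using Cp by (simp add: field_simps power2_eq_square)
  finally have "B^2/C \<le> A" by simp
  thus ?thesis using Cp by (simp add: field_simps)
qed

lemma L_nonneg_aux:
  fixes x :: "real^'n"
  assumes "x \<noteq> 0" "0 \<le> q" "q \<le> L * (x \<bullet> x)"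
  shows "0 \<le> L"
proof -
  have "0 < x \<bullet> x" using assms(1) by simp
  moreover have "0 \<le> L * (x \<bullet> x)" using assms by linarith
  ultimately show ?thesis by (meson not_le mult_neg_pos)
qed

lemma psd_norm:
  fixes S :: "real^'n^'n"
  assumes sym: "symm S" and nn: "\<And>x. 0 \<le> x \<bullet> (S *v x)" and up: "\<And>x. x \<bullet> (S *v x) \<le> L * (x \<bullet> x)"
  shows "norm (S *v x) \<le> L * norm x"
proof (cases "S *v x = 0")
  case True
  have "(1::real^'n) \<noteq> 0" by simp
  from L_nonneg_aux[OF this nn[of 1] up[of 1]] have "0 \<le> L" .
  then show ?thesis using True by simp
next
  case False
  have symS: "\<And>u v. u \<bullet> (S *v v) = (S *v u) \<bullet> v" using sym by (simp add: symm_def)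
  define y where "y = S *v x"
  have "(x \<bullet> (S *v y))^2 \<le> (x \<bullet> (S *v x)) * (y \<bullet> (S *v y))"
  proof (rule quad_nonneg_cs)
    show "0 \<le> y \<bullet> (S *v y)" by (rule nn)
    fix t :: real
    have "0 \<le> (x + t *\<^sub>R y) \<bullet> (S *v (x + t *\<^sub>R y))" by (rule nn)
    also have "\<dots> = (x + t *\<^sub>R y) \<bullet> (S *v x + t *\<^sub>R (S *v y))"
      by (simp add: matrix_vector_right_distrib matrix_vector_mult_scaleR)
    also have "\<dots> = x \<bullet> (S *v x) + t * (x \<bullet> (S *v y)) + t * (y \<bullet> (S *v x)) + t^2 * (y \<bullet> (S *v y))"
      by (simp add: inner_add_left inner_add_right power2_eq_square algebra_simps)
    also have "y \<bullet> (S *v x) = x \<bullet> (S *v y)" using symS[of y x] by (simp add: inner_commute)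
    also have "x \<bullet> (S *v x) + t * (x \<bullet> (S *v y)) + t * (x \<bullet> (S *v y)) + t^2 * (y \<bullet> (S *v y))
       = x \<bullet> (S *v x) + 2 * t * (x \<bullet> (S *v y)) + t^2 * (y \<bullet> (S *v y))" by simp
    finally show "0 \<le> x \<bullet> (S *v x) + 2 * t * (x \<bullet> (S *v y)) + t^2 * (y \<bullet> (S *v y))" .
  qed
  moreover have "x \<bullet> (S *v y) = y \<bullet> y" using symS[of x y] by (simp add: y_def inner_commute)
  moreover have "(x \<bullet> (S *v x)) * (y \<bullet> (S *v y)) \<le> (L * (x \<bullet> x)) * (L * (y \<bullet> y))"
  proof (rule mult_mono[OF up[of x] up[of y] _ nn[of y]])
    show "0 \<le> L * (x \<bullet> x)" using nn[of x] up[of x] by linarith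
  qed
  ultimately have "(y \<bullet> y)^2 \<le> (L * (x \<bullet> x)) * (L * (y \<bullet> y))" by simp
  hence "(y \<bullet> y) * (y \<bullet> y) \<le> (L^2 * (x \<bullet> x)) * (y \<bullet> y)" by (simp add: power2_eq_square algebra_simps)
  moreover have "y \<bullet> y > 0" using False by (simp add: y_def)
  ultimately have "y \<bullet> y \<le> L^2 * (x \<bullet> x)" by simp
  hence "(norm y)^2 \<le> (L * norm x)^2" by (simp add: dot_square_norm power_mult_distrib)
  moreover have "0 \<le> L"
  proof -
    have "x \<noteq> 0" using False by auto
    from L_nonneg_aux[OF this nn[of x] up[of x]] show ?thesis .
  qed
  ultimately have "norm y \<le> L * norm x" by (meson power2_le_imp_le mult_nonneg_nonneg norm_ge_zero)
  thus ?thesis by (simp add: y_def)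
qed

lemma mnorm_bound: "norm (A *v x) \<le> mnorm A * norm x"
  unfolding mnorm_def by (rule onorm) simp

lemma mnorm_nonneg: "0 \<le> mnorm A"
  unfolding mnorm_def by (rule onorm_pos_le) simp

lemma dir_bound:
  fixes D :: "real^'n"
  assumes "\<And>u. norm u = 1 \<Longrightarrow> D \<bullet> u \<le> K"
  shows "norm D \<le> K"
proof (cases "D = 0")
  case True
  have "0 \<le> K"
  proof -
    have "(1::real^'n) \<noteq> 0" by simp
    hence "norm ((1/norm (1::real^'n)) *\<^sub>R (1::real^'n)) = 1" by simp
    from assms[OF this] show ?thesis using True by simp
  qed
  thus ?thesis using True by simp
next
  case False
  have "norm ((1/norm D) *\<^sub>R D) = 1" using False by simp
  from assms[OF this] have "D \<bullet> ((1/norm D) *\<^sub>R D) \<le> K" .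
  thus ?thesis using False by (simp add: dot_square_norm power2_eq_square)
qed

lemma taylor_bound:
  fixes G :: "real^'n \<Rightarrow> real^'n"
  assumes dg: "\<And>v. (G has_derivative (\<lambda>h. Hs v *v h)) (at v)"
    and lip: "\<And>v z. mnorm (Hs v - Hs z) \<le> M * norm (v - z)"
  shows "norm (G w - G ws - Hs w *v (w - ws)) \<le> M/2 * (norm (w - ws))^2"
proof (rule dir_bound)
  fix u :: "real^'n" assume u: "norm u = 1"
  define e where "e = w - ws"
  define K where "K = M * (norm e)^2"
  define s where "s = (\<lambda>t. G (ws + t *\<^sub>R e) \<bullet> u - t * ((Hs w *v e) \<bullet> u) + K * (1-t)^2/2)"
  define s' where "s' = (\<lambda>t. (Hs (ws + t *\<^sub>R e) *v e) \<bullet> u - (Hs w *v e) \<bullet> u - K * (1-t))"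
  have sd: "(s has_real_derivative s' t) (at t)" for t
    unfolding s_def s'_def
    by (rule derivative_eq_intros line_deriv_g[OF dg] refl | simp add: field_simps)+
  obtain z where z: "0 < z" "z < 1" and sz: "s 1 - s 0 = (1 - 0) * s' z"
    using MVT2[of 0 1 s s'] sd by auto
  have "s' z \<le> 0"
  proof -
    have "(Hs (ws + z *\<^sub>R e) *v e) \<bullet> u - (Hs w *v e) \<bullet> u = ((Hs (ws + z *\<^sub>R e) - Hs w) *v e) \<bullet> u"
      by (simp add: matrix_vector_mult_diff_rdistrib inner_diff_left)
    also have "\<dots> \<le> norm ((Hs (ws + z *\<^sub>R e) - Hs w) *v e) * norm u" by (rule norm_cauchy_schwarz)
    also have "\<dots> \<le> mnorm (Hs (ws + z *\<^sub>R e) - Hs w) * norm e" using u mnorm_bound by simp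
    also have "\<dots> \<le> (M * norm (ws + z *\<^sub>R e - w)) * norm e"
      by (intro mult_right_mono lip) simp
    also have "ws + z *\<^sub>R e - w = (z - 1) *\<^sub>R e" by (simp add: e_def algebra_simps)
    also have "M * norm ((z - 1) *\<^sub>R e) * norm e = K * (1 - z)"
      using z by (simp add: K_def power2_eq_square)
    finally show ?thesis by (simp add: s'_def)
  qed
  hence "s 1 \<le> s 0" using sz by simp
  hence "G w \<bullet> u - (Hs w *v e) \<bullet> u \<le> G ws \<bullet> u + K/2"
    by (simp add: s_def e_def)
  thus "(G w - G ws - Hs w *v (w - ws)) \<bullet> u \<le> M/2 * (norm (w - ws))^2"
    by (simp add: inner_diff_left K_def e_def)
qed

lemma grad_bound:
  fixes G :: "real^'n \<Rightarrow> real^'n"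
  assumes dg: "\<And>v. (G has_derivative (\<lambda>h. Hs v *v h)) (at v)"
    and hb: "\<And>v x. norm (Hs v *v x) \<le> L * norm x"
  shows "norm (G w - G ws) \<le> L * norm (w - ws)"
proof (rule dir_bound)
  fix u :: "real^'n" assume u: "norm u = 1"
  define e where "e = w - ws"
  define s where "s = (\<lambda>t. G (ws + t *\<^sub>R e) \<bullet> u - t * (L * norm e))"
  define s' where "s' = (\<lambda>t. (Hs (ws + t *\<^sub>R e) *v e) \<bullet> u - L * norm e)"
  have sd: "(s has_real_derivative s' t) (at t)" for t
    unfolding s_def s'_def
    by (rule derivative_eq_intros line_deriv_g[OF dg] refl | simp)+
  obtain z where z: "0 < z" "z < 1" and sz: "s 1 - s 0 = (1 - 0) * s' z"
    using MVT2[of 0 1 s s'] sd by auto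
  have "(Hs (ws + z *\<^sub>R e) *v e) \<bullet> u \<le> norm (Hs (ws + z *\<^sub>R e) *v e) * norm u"
    by (rule norm_cauchy_schwarz)
  also have "\<dots> \<le> L * norm e" using u hb by simp
  finally have "s' z \<le> 0" by (simp add: s'_def)
  hence "s 1 \<le> s 0" using sz by simp
  thus "(G w - G ws) \<bullet> u \<le> L * norm (w - ws)"
    by (simp add: s_def e_def inner_diff_left)
qed

lemma inv_bound:
  fixes A :: "real^'n^'n"
  assumes lo: "\<And>x. m * (x \<bullet> x) \<le> x \<bullet> (A *v x)" and m: "0 < m"
  shows "m * norm x \<le> norm (A *v x)"
proof (cases "x = 0")
  case False
  have "m * (norm x)^2 \<le> x \<bullet> (A *v x)" using lo[of x] by (simp add: dot_square_norm)
  also have "\<dots> \<le> norm x * norm (A *v x)" by (rule norm_cauchy_schwarz)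
  finally have "norm x * (m * norm x) \<le> norm x * norm (A *v x)" by (simp add: power2_eq_square algebra_simps)
  thus ?thesis using False by simp
qed simp

lemma solve_exists:
  fixes A :: "real^'n^'n"
  assumes lo: "\<And>x. m * (x \<bullet> x) \<le> x \<bullet> (A *v x)" and m: "0 < m"
  shows "\<exists>p. A *v p = c"
proof -
  have "inj ((*v) A)"
  proof (rule injI)
    fix x y assume "A *v x = A *v y"
    hence "A *v (x - y) = 0" by (simp add: matrix_vector_mult_diff_distrib)
    hence "m * norm (x - y) \<le> 0" using inv_bound[OF lo m, of "x - y"] by simp
    thus "x = y" using m by (simp add: mult_le_0_iff)
  qed
  hence "surj ((*v) A)" by (intro linear_inj_imp_surj) simp_all
  thus ?thesis unfolding surj_def by (metis)
qed

lemma samples_0: "samples N 0 = {[]}"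
  by (auto simp: samples_def)

lemma samples_Suc: "samples N (Suc b) = (\<lambda>(i,S). i # S) ` ({..<N} \<times> samples N b)"
proof
  show "samples N (Suc b) \<subseteq> (\<lambda>(i,S). i # S) ` ({..<N} \<times> samples N b)"
  proof
    fix S assume "S \<in> samples N (Suc b)"
    then obtain i T where "S = i # T" "length T = b" "i < N" "set T \<subseteq> {..<N}"
      by (cases S) (auto simp: samples_def)
    thus "S \<in> (\<lambda>(i,S). i # S) ` ({..<N} \<times> samples N b)"
      by (auto simp: samples_def image_iff)
  qed
qed (auto simp: samples_def)

lemma finite_samples: "finite (samples N b)"
proof -
  have "samples N b = {xs. set xs \<subseteq> {..<N} \<and> length xs = b}" by (auto simp: samples_def)
  thus ?thesis using finite_lists_length_eq[of "{..<N}" b] by simp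
qed

lemma card_samples: "card (samples N b) = N ^ b"
proof -
  have "samples N b = {xs. set xs \<subseteq> {..<N} \<and> length xs = b}" by (auto simp: samples_def)
  thus ?thesis using card_lists_length_eq[of "{..<N}" b] by simp
qed

lemma sum_samples_Suc:
  "(\<Sum>S\<in>samples N (Suc b). f S) = (\<Sum>i<N. \<Sum>S\<in>samples N b. f (i # S))"
proof -
  have inj: "inj_on (\<lambda>(i,S). i # S) ({..<N} \<times> samples N b)"
    by (auto simp: inj_on_def)
  have "(\<Sum>S\<in>samples N (Suc b). f S) = (\<Sum>p\<in>{..<N} \<times> samples N b. f ((\<lambda>(i,S). i # S) p))"
    unfolding samples_Suc by (rule sum.reindex[OF inj, unfolded comp_def])
  also have "\<dots> = (\<Sum>(i,S)\<in>{..<N} \<times> samples N b. f (i # S))"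
    by (rule sum.cong) auto
  also have "\<dots> = (\<Sum>i<N. \<Sum>S\<in>samples N b. f (i # S))"
    by (rule sum.cartesian_product[symmetric])
  finally show ?thesis .
qed

lemma var_sum:
  fixes u :: "nat \<Rightarrow> real^'n"
  assumes u0: "(\<Sum>i<N. u i) = 0"
  shows "real N * (\<Sum>S\<in>samples N b. (norm (sum_list (map u S)))^2)
       = real b * real N ^ b * (\<Sum>i<N. (norm (u i))^2)"
proof (induction b)
  case 0 show ?case by (simp add: samples_0)
next
  case (Suc b)
  let ?V = "\<lambda>S. sum_list (map u S)"
  have "(\<Sum>S\<in>samples N (Suc b). (norm (?V S))^2) = (\<Sum>i<N. \<Sum>S\<in>samples N b. (norm (u i + ?V S))^2)"
    by (simp add: sum_samples_Suc)
  also have "\<dots> = (\<Sum>i<N. \<Sum>S\<in>samples N b. (norm (u i))^2 + 2 * (u i \<bullet> ?V S) + (norm (?V S))^2)"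
    by (simp add: power2_norm_eq_inner inner_add_left inner_add_right inner_commute algebra_simps)
  also have "\<dots> = real N ^ b * (\<Sum>i<N. (norm (u i))^2) + 2 * ((\<Sum>i<N. u i) \<bullet> (\<Sum>S\<in>samples N b. ?V S))
       + real N * (\<Sum>S\<in>samples N b. (norm (?V S))^2)"
    by (simp add: sum.distrib sum_distrib_left inner_sum_left inner_sum_right card_samples
        sum.swap[of _ "{..<N}"] sum_distrib_right[symmetric] mult.commute)
  also have "\<dots> = real N ^ b * (\<Sum>i<N. (norm (u i))^2) + real N * (\<Sum>S\<in>samples N b. (norm (?V S))^2)"
    using u0 by simp
  finally have "real N * (\<Sum>S\<in>samples N (Suc b). (norm (?V S))^2)
     = real N * (real N ^ b * (\<Sum>i<N. (norm (u i))^2)) + real N * (real N * (\<Sum>S\<in>samples N b. (norm (?V S))^2))"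
    by (simp add: algebra_simps)
  also have "\<dots> = real N * (real N ^ b * (\<Sum>i<N. (norm (u i))^2)) + real N * (real b * real N ^ b * (\<Sum>i<N. (norm (u i))^2))"
    using Suc by simp
  also have "\<dots> = real (Suc b) * real N ^ Suc b * (\<Sum>i<N. (norm (u i))^2)"
    by (simp add: algebra_simps)
  finally show ?case .
qed

lemma exp_bound:
  fixes u :: "nat \<Rightarrow> real^'n"
  assumes u0: "(\<Sum>i<N. u i) = 0" and N: "N \<ge> 1" and b: "b \<ge> 1"
    and V: "(\<Sum>i<N. (norm (u i))^2) \<le> real N * V"
  shows "sample_exp N b (\<lambda>S. norm ((1/real b) *\<^sub>R sum_list (map u S))) \<le> sqrt (V / real b)"
proof -
  let ?V = "\<lambda>S. sum_list (map u S)"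
  define X where "X = (\<lambda>S. norm ((1/real b) *\<^sub>R ?V S))"
  define P where "P = real N ^ b"
  have Pp: "P > 0" using N by (simp add: P_def)
  have Np: "real N > 0" using N by simp
  have bp: "real b > 0" using b by simp
  have X2: "(X S)^2 = (norm (?V S))^2 / (real b)^2" for S
    by (simp add: X_def power_divide power_mult_distrib)
  have SV: "(\<Sum>S\<in>samples N b. (norm (?V S))^2) \<le> real b * P * V"
  proof -
    have "real N * (\<Sum>S\<in>samples N b. (norm (?V S))^2) = real b * P * (\<Sum>i<N. (norm (u i))^2)"
      using var_sum[OF u0, of b] by (simp add: P_def)
    also have "\<dots> \<le> real b * P * (real N * V)" using V bp Pp by (intro mult_left_mono) auto
    finally show ?thesis using Np by (simp add: algebra_simps)
  qed
  have "(\<Sum>S\<in>samples N b. X S)^2 \<le> (\<Sum>S\<in>samples N b. (X S)^2) * real (card (samples N b))"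
    by (rule sum_squared_le_sum_of_squares)
  also have "\<dots> = (\<Sum>S\<in>samples N b. (norm (?V S))^2) / (real b)^2 * P"
    by (simp add: X2 sum_divide_distrib card_samples P_def)
  also have "\<dots> \<le> (real b * P * V) / (real b)^2 * P"
    using SV Pp bp by (intro mult_right_mono divide_right_mono) auto
  also have "\<dots> = P^2 * (V / real b)" using bp by (simp add: power2_eq_square field_simps)
  finally have sq: "(\<Sum>S\<in>samples N b. X S)^2 \<le> P^2 * (V / real b)" .
  have "(sample_exp N b X)^2 = (\<Sum>S\<in>samples N b. X S)^2 / P^2"
    by (simp add: sample_exp_def P_def power_divide)
  also have "\<dots> \<le> V / real b" using sq Pp by (simp add: field_simps)
  finally have "(sample_exp N b X)^2 \<le> V / real b" .
  hence "sample_exp N b X \<le> sqrt (V / real b)" by (rule real_le_rsqrt)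
  thus ?thesis by (simp add: X_def)
qed

lemma mat_scale_mv: "(m *\<^sub>R mat 1) *v x = m *\<^sub>R (x::real^'n)"
  by (simp add: scaleR_matrix_vector_assoc[symmetric])

lemma loewner_lower: "loewner_le (m *\<^sub>R mat 1) A \<Longrightarrow> m * (x \<bullet> x) \<le> x \<bullet> (A *v x)"
  by (simp add: loewner_le_def mat_scale_mv)

lemma loewner_upper: "loewner_le A (m *\<^sub>R mat 1) \<Longrightarrow> x \<bullet> (A *v x) \<le> m * (x \<bullet> x)"
  by (simp add: loewner_le_def mat_scale_mv)

lemma sum_mv: "(\<Sum>i\<in>I. M i) *v x = (\<Sum>i\<in>I. M i *v (x::real^'n))"
  by (induction I rule: infinite_finite_induct) (simp_all add: matrix_vector_mult_add_rdistrib)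

lemma sum_list_mv: "sum_list (map M S) *v x = sum_list (map (\<lambda>i. M i *v (x::real^'n)) S)"
  by (induction S) (simp_all add: matrix_vector_mult_add_rdistrib)

lemma symm_add: "symm A \<Longrightarrow> symm B \<Longrightarrow> symm (A + B)"
  by (simp add: symm_def matrix_vector_mult_add_rdistrib inner_add_left inner_add_right)

lemma symm_diff: "symm A \<Longrightarrow> symm B \<Longrightarrow> symm (A - B)"
  by (simp add: symm_def matrix_vector_mult_diff_rdistrib inner_diff_left inner_diff_right)

lemma symm_scale: "symm A \<Longrightarrow> symm (c *\<^sub>R A)"
  by (simp add: symm_def scaleR_matrix_vector_assoc[symmetric])

lemma symm_zero: "symm 0"
  by (simp add: symm_def)

lemma symm_sum: "(\<And>i. i \<in> I \<Longrightarrow> symm (M i)) \<Longrightarrow> symm (\<Sum>i\<in>I. M i)"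
  by (induction I rule: infinite_finite_induct) (simp_all add: symm_zero symm_add)

lemma symm_sum_list: "(\<And>i. i \<in> set S \<Longrightarrow> symm (M i)) \<Longrightarrow> symm (sum_list (map M S))"
  by (induction S) (simp_all add: symm_zero symm_add)

lemma sample_exp_mono:
  assumes "\<And>S. S \<in> samples N b \<Longrightarrow> X S \<le> Y S"
  shows "sample_exp N b X \<le> sample_exp N b Y"
  unfolding sample_exp_def using assms by (intro divide_right_mono sum_mono) auto

lemma sample_exp_affine:
  assumes "N \<ge> 1"
  shows "sample_exp N b (\<lambda>S. c * X S + d) = c * sample_exp N b X + d"
proof -
  have "real N ^ b > 0" using assms by simp
  thus ?thesis unfolding sample_exp_def
    by (simp add: sum.distrib sum_distrib_left[symmetric] card_samples field_simps)
qed

lemma sum_list_const_scaleR: "sum_list (map (\<lambda>i. X) S) = real (length S) *\<^sub>R (X::real^'n^'n)"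
  by (induction S) (simp_all add: scaleR_add_left)

theorem lemma3p1:
  fixes F :: "nat \<Rightarrow> real^'n \<Rightarrow> real"
    and g :: "nat \<Rightarrow> real^'n \<Rightarrow> real^'n"
    and H :: "nat \<Rightarrow> real^'n \<Rightarrow> real^'n^'n"
    and N \<beta> r :: nat
    and \<mu> L \<mu>\<beta> L\<beta> M \<sigma> :: real
    and wstar w :: "real^'n"
  defines "R \<equiv> (\<lambda>v. (1 / real N) * (\<Sum>i<N. F i v))"
      and "gradR \<equiv> (\<lambda>v. (1 / real N) *\<^sub>R (\<Sum>i<N. g i v))"
      and "hessR \<equiv> (\<lambda>v. (1 / real N) *\<^sub>R (\<Sum>i<N. H i v))"
  assumes N_pos: "N \<ge> 1"
    and C2_F: "\<And>i v. i < N \<Longrightarrow> (F i has_derivative (\<lambda>h. g i v \<bullet> h)) (at v)"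
    and C2_g: "\<And>i v. i < N \<Longrightarrow> (g i has_derivative (\<lambda>h. H i v *v h)) (at v)"
    and C2_H: "\<And>i. i < N \<Longrightarrow> continuous_on UNIV (H i)"
    and A1_uniform: "\<exists>\<mu>bar Lbar. 0 < \<mu>bar \<and>
        (\<forall>b>0. \<exists>m l. \<mu>bar \<le> m \<and> m \<le> l \<and> l \<le> Lbar \<and>
           (\<forall>S\<in>samples N b. \<forall>v. loewner_le (m *\<^sub>R mat 1) (sub_hess H S v)
                                  \<and> loewner_le (sub_hess H S v) (l *\<^sub>R mat 1)))"
    and A1_beta_pos: "0 < \<mu>\<beta>" "\<mu>\<beta> \<le> L\<beta>"
    and A1_beta: "\<And>S v. S \<in> samples N \<beta> \<Longrightarrow>
        loewner_le (\<mu>\<beta> *\<^sub>R mat 1) (sub_hess H S v) \<and> loewner_le (sub_hess H S v) (L\<beta> *\<^sub>R mat 1)"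
    and A1_R: "0 < \<mu>" "\<mu> \<le> L"
      "\<And>v. loewner_le (\<mu> *\<^sub>R mat 1) (hessR v) \<and> loewner_le (hessR v) (L *\<^sub>R mat 1)"
    and A3: "\<And>v z. mnorm (hessR v - hessR z) \<le> M * norm (v - z)"
    and A4: "\<sigma> \<ge> 0"
      "\<And>v. mnorm ((1 / real N) *\<^sub>R (\<Sum>i<N. (H i v - hessR v) ** (H i v - hessR v))) \<le> \<sigma>\<^sup>2"
    and wstar_min: "\<And>v. R wstar \<le> R v"
    and wstar_unique: "\<And>u. (\<forall>v. R u \<le> R v) \<Longrightarrow> u = wstar"
    and beta_pos: "\<beta> \<ge> 1"
    and r_lt_d: "r < CARD('n)"
  shows "let \<delta> = L\<beta> / \<mu>\<beta>;
             \<theta> = (sqrt \<delta> - 1) / (sqrt \<delta> + 1);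
             C1 = M / (2 * \<mu>\<beta>);
             C2 = \<sigma> / \<mu>\<beta>;
             C3 = 2 * L / \<mu>\<beta> * sqrt \<delta>
         in sample_exp N \<beta> (\<lambda>S. norm (w + cg (sub_hess H S w) (- gradR w) r - wstar))
            \<le> C1 * (norm (w - wstar))\<^sup>2 + (C2 / sqrt (real \<beta>) + C3 * \<theta> ^ r) * norm (w - wstar)"
proof -
  have Np: "real N > 0" using N_pos by simp
  have symH: "symm (H i v)" if i: "i < N" for i v
  proof -
    have "\<And>a b. (H i v *v b) \<bullet> a = (H i v *v a) \<bullet> b"
      by (rule hess_symm[OF C2_F[OF i] C2_g[OF i] C2_H[OF i]])
    thus ?thesis unfolding symm_def by (metis inner_commute)
  qed
  have symHR: "symm (hessR v)" for v
    unfolding hessR_def by (intro symm_scale symm_sum symH) simp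
  have symSH: "symm (sub_hess H S v)" if S: "S \<in> samples N \<beta>" for S v
    unfolding sub_hess_def using S by (intro symm_scale symm_sum_list symH) (auto simp: samples_def)
  have dR: "(R has_derivative (\<lambda>h. gradR v \<bullet> h)) (at v)" for v
  proof -
    have "((\<lambda>v. \<Sum>i<N. F i v) has_derivative (\<lambda>h. \<Sum>i<N. g i v \<bullet> h)) (at v)"
      by (rule has_derivative_sum) (simp add: C2_F)
    hence "((\<lambda>v. (1 / real N) * (\<Sum>i<N. F i v)) has_derivative (\<lambda>h. (1 / real N) * (\<Sum>i<N. g i v \<bullet> h))) (at v)"
      by (rule has_derivative_mult_right)
    thus ?thesis unfolding R_def gradR_def
      by (rule has_derivative_eq_rhs) (simp add: fun_eq_iff inner_sum_left)
  qed
  have dG: "(gradR has_derivative (\<lambda>h. hessR v *v h)) (at v)" for v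
  proof -
    have "((\<lambda>v. \<Sum>i<N. g i v) has_derivative (\<lambda>h. \<Sum>i<N. H i v *v h)) (at v)"
      by (rule has_derivative_sum) (simp add: C2_g)
    hence "((\<lambda>v. (1 / real N) *\<^sub>R (\<Sum>i<N. g i v)) has_derivative (\<lambda>h. (1 / real N) *\<^sub>R (\<Sum>i<N. H i v *v h))) (at v)"
      by (rule has_derivative_scaleR_right)
    thus ?thesis unfolding gradR_def hessR_def
      by (rule has_derivative_eq_rhs) (simp add: fun_eq_iff sum_mv scaleR_matrix_vector_assoc[symmetric])
  qed
  have g0: "gradR wstar = 0"
  proof -
    have "(\<lambda>h. gradR wstar \<bullet> h) = (\<lambda>h. 0)"
      by (rule has_derivative_local_min[OF dR]) (simp add: wstar_min)
    hence "gradR wstar \<bullet> gradR wstar = 0" by metis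
    thus ?thesis by simp
  qed
  have hRb: "norm (hessR v *v x) \<le> L * norm x" for v x
  proof (rule psd_norm[OF symHR])
    fix y :: "real^'n"
    have "\<mu> * (y \<bullet> y) \<le> y \<bullet> (hessR v *v y)" using A1_R(3) by (rule loewner_lower[OF conjunct1])
    moreover have "0 \<le> \<mu> * (y \<bullet> y)" using A1_R(1) by simp
    ultimately show "0 \<le> y \<bullet> (hessR v *v y)" by linarith
    show "y \<bullet> (hessR v *v y) \<le> L * (y \<bullet> y)" using A1_R(3) by (rule loewner_upper[OF conjunct2])
  qed
  define e where "e = w - wstar"
  have gb: "norm (gradR w) \<le> L * norm e"
    using grad_bound[OF dG hRb, of w wstar] g0 by (simp add: e_def)
  have tb: "norm (gradR w - hessR w *v e) \<le> M/2 * (norm e)^2"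
    using taylor_bound[OF dG A3, of w wstar] g0 by (simp add: e_def)
  define \<delta> where "\<delta> = L\<beta> / \<mu>\<beta>"
  define \<theta> where "\<theta> = (sqrt \<delta> - 1) / (sqrt \<delta> + 1)"
  define Kc where "Kc = M / (2 * \<mu>\<beta>) * (norm e)^2 + 2 * sqrt \<delta> * \<theta>^r * (L * norm e) / \<mu>\<beta>"
  have persample: "norm (w + cg (sub_hess H S w) (- gradR w) r - wstar)
       \<le> (1/\<mu>\<beta>) * norm ((sub_hess H S w - hessR w) *v e) + Kc"
    if S: "S \<in> samples N \<beta>" for S
  proof -
    define A where "A = sub_hess H S w"
    have lo: "\<And>x. \<mu>\<beta> * (x \<bullet> x) \<le> x \<bullet> (A *v x)"
      using A1_beta[OF S] unfolding A_def by (blast intro: loewner_lower)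
    have hi: "\<And>x. x \<bullet> (A *v x) \<le> L\<beta> * (x \<bullet> x)"
      using A1_beta[OF S] unfolding A_def by (blast intro: loewner_upper)
    have symA: "symm A" unfolding A_def by (rule symSH[OF S])
    obtain pst where pst: "A *v pst = - gradR w" using solve_exists[OF lo A1_beta_pos(1)] by blast
    have cgb: "norm (cg A (A *v pst) r - pst) \<le> 2 * sqrt \<delta> * \<theta>^r * norm pst"
      using cg_bound[OF symA lo hi A1_beta_pos] unfolding \<delta>_def \<theta>_def by blast
    have "\<mu>\<beta> * norm pst \<le> norm (A *v pst)" by (rule inv_bound[OF lo A1_beta_pos(1)])
    also have "\<dots> \<le> L * norm e" using gb pst by simp
    finally have pstb: "norm pst \<le> L * norm e / \<mu>\<beta>" using A1_beta_pos(1) by (simp add: field_simps)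
    have "\<mu>\<beta> * norm (e + pst) \<le> norm (A *v (e + pst))" by (rule inv_bound[OF lo A1_beta_pos(1)])
    also have "A *v (e + pst) = (A - hessR w) *v e - (gradR w - hessR w *v e)"
      using pst by (simp add: matrix_vector_right_distrib matrix_vector_mult_diff_rdistrib)
    also have "norm \<dots> \<le> norm ((A - hessR w) *v e) + M/2 * (norm e)^2"
      using norm_triangle_ineq4[of "(A - hessR w) *v e" "gradR w - hessR w *v e"] tb by linarith
    finally have ep: "norm (e + pst) \<le> (1/\<mu>\<beta>) * norm ((A - hessR w) *v e) + M / (2 * \<mu>\<beta>) * (norm e)^2"
      using A1_beta_pos(1) by (simp add: field_simps)
    have t0: "0 \<le> 2 * sqrt \<delta> * \<theta>^r"
    proof -
      have s1: "1 \<le> sqrt \<delta>" using A1_beta_pos by (simp add: \<delta>_def)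
      hence "0 \<le> \<theta>" by (simp add: \<theta>_def)
      thus ?thesis using s1 by simp
    qed
    have "w + cg A (- gradR w) r - wstar = (e + pst) + (cg A (A *v pst) r - pst)"
      using pst by (simp add: e_def)
    hence "norm (w + cg A (- gradR w) r - wstar) \<le> norm (e + pst) + norm (cg A (A *v pst) r - pst)"
      by (metis norm_triangle_ineq)
    also have "\<dots> \<le> ((1/\<mu>\<beta>) * norm ((A - hessR w) *v e) + M / (2 * \<mu>\<beta>) * (norm e)^2)
        + 2 * sqrt \<delta> * \<theta>^r * (L * norm e / \<mu>\<beta>)"
      using ep cgb pstb t0 by (smt (verit) mult_left_mono)
    finally show ?thesis by (simp add: A_def Kc_def)
  qed
  define u where "u = (\<lambda>i. (H i w - hessR w) *v e)"
  have u0: "(\<Sum>i<N. u i) = 0"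
  proof -
    have "(\<Sum>i<N. u i) = (\<Sum>i<N. H i w *v e) - (\<Sum>i<N. hessR w *v e)"
      by (simp only: u_def matrix_vector_mult_diff_rdistrib sum_subtractf)
    also have "(\<Sum>i<N. hessR w *v e) = real N *\<^sub>R (hessR w *v e)"
      by (simp only: sum_constant_scaleR card_lessThan)
    also have "(\<Sum>i<N. H i w *v e) = real N *\<^sub>R (hessR w *v e)"
      using Np by (simp add: hessR_def sum_mv scaleR_matrix_vector_assoc[symmetric])
    finally show ?thesis by simp
  qed
  have uS: "(sub_hess H S w - hessR w) *v e = (1 / real \<beta>) *\<^sub>R sum_list (map u S)"
    if S: "S \<in> samples N \<beta>" for S
  proof -
    have len: "length S = \<beta>" using S by (simp add: samples_def)
    have "hessR w = (1 / real \<beta>) *\<^sub>R sum_list (map (\<lambda>i. hessR w) S)"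
      using len beta_pos by (simp add: sum_list_const_scaleR)
    hence "sub_hess H S w - hessR w = (1 / real \<beta>) *\<^sub>R sum_list (map (\<lambda>i. H i w) S)
        - (1 / real \<beta>) *\<^sub>R sum_list (map (\<lambda>i. hessR w) S)"
      unfolding sub_hess_def len by simp
    also have "\<dots> = (1 / real \<beta>) *\<^sub>R (sum_list (map (\<lambda>i. H i w) S) - sum_list (map (\<lambda>i. hessR w) S))"
      by (rule scaleR_right_diff_distrib[symmetric])
    also have "sum_list (map (\<lambda>i. H i w) S) - sum_list (map (\<lambda>i. hessR w) S) = sum_list (map (\<lambda>i. H i w - hessR w) S)"
      by (rule sum_list_subtractf[symmetric])
    finally have "sub_hess H S w - hessR w = (1 / real \<beta>) *\<^sub>R sum_list (map (\<lambda>i. H i w - hessR w) S)" .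
    thus ?thesis
      by (simp add: scaleR_matrix_vector_assoc[symmetric] sum_list_mv u_def)
  qed
  define Mv where "Mv = (1 / real N) *\<^sub>R (\<Sum>i<N. (H i w - hessR w) ** (H i w - hessR w))"
  have uV: "(\<Sum>i<N. (norm (u i))^2) \<le> real N * (\<sigma>^2 * (norm e)^2)"
  proof -
    have "(norm (u i))^2 = e \<bullet> (((H i w - hessR w) ** (H i w - hessR w)) *v e)" if i: "i < N" for i
    proof -
      have sD: "symm (H i w - hessR w)" by (rule symm_diff[OF symH[OF i] symHR])
      have "(norm (u i))^2 = u i \<bullet> u i" by (simp add: power2_norm_eq_inner)
      also have "\<dots> = e \<bullet> ((H i w - hessR w) *v u i)"
        using sD[unfolded symm_def, rule_format, of e "u i"] by (simp add: u_def)
      also have "\<dots> = e \<bullet> (((H i w - hessR w) ** (H i w - hessR w)) *v e)"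
        by (simp add: u_def matrix_vector_mul_assoc)
      finally show ?thesis .
    qed
    hence "(\<Sum>i<N. (norm (u i))^2) = (\<Sum>i<N. e \<bullet> (((H i w - hessR w) ** (H i w - hessR w)) *v e))"
      by (intro sum.cong) auto
    also have "\<dots> = real N * (e \<bullet> (Mv *v e))"
      using Np by (simp add: Mv_def inner_sum_right sum_mv scaleR_matrix_vector_assoc[symmetric])
    also have "\<dots> \<le> real N * (\<sigma>^2 * (norm e)^2)"
    proof -
      have "e \<bullet> (Mv *v e) \<le> norm e * norm (Mv *v e)" by (rule norm_cauchy_schwarz)
      also have "\<dots> \<le> norm e * (mnorm Mv * norm e)" by (intro mult_left_mono mnorm_bound) simp
      also have "\<dots> \<le> norm e * (\<sigma>^2 * norm e)"
        using A4(2)[of w] unfolding Mv_def[symmetric] by (intro mult_left_mono mult_right_mono) auto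
      finally show ?thesis using Np by (simp add: power2_eq_square algebra_simps)
    qed
    finally show ?thesis .
  qed
  have Eb: "sample_exp N \<beta> (\<lambda>S. norm ((1/real \<beta>) *\<^sub>R sum_list (map u S))) \<le> \<sigma> * norm e / sqrt (real \<beta>)"
  proof -
    have "sample_exp N \<beta> (\<lambda>S. norm ((1/real \<beta>) *\<^sub>R sum_list (map u S))) \<le> sqrt (\<sigma>^2 * (norm e)^2 / real \<beta>)"
      by (rule exp_bound[OF u0 N_pos beta_pos uV])
    also have "\<dots> = \<sigma> * norm e / sqrt (real \<beta>)"
      using A4(1) by (simp add: real_sqrt_divide real_sqrt_mult)
    finally show ?thesis .
  qed
  have "sample_exp N \<beta> (\<lambda>S. norm (w + cg (sub_hess H S w) (- gradR w) r - wstar))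
      \<le> sample_exp N \<beta> (\<lambda>S. (1/\<mu>\<beta>) * norm ((1/real \<beta>) *\<^sub>R sum_list (map u S)) + Kc)"
    by (rule sample_exp_mono) (use persample uS in simp)
  also have "\<dots> = (1/\<mu>\<beta>) * sample_exp N \<beta> (\<lambda>S. norm ((1/real \<beta>) *\<^sub>R sum_list (map u S))) + Kc"
    by (rule sample_exp_affine[OF N_pos])
  also have "\<dots> \<le> (1/\<mu>\<beta>) * (\<sigma> * norm e / sqrt (real \<beta>)) + Kc"
    using Eb A1_beta_pos(1) by (intro add_right_mono mult_left_mono) auto
  also have "\<dots> = M / (2 * \<mu>\<beta>) * (norm (w - wstar))\<^sup>2
      + (\<sigma> / \<mu>\<beta> / sqrt (real \<beta>) + 2 * L / \<mu>\<beta> * sqrt \<delta> * \<theta> ^ r) * norm (w - wstar)"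
    by (simp add: Kc_def e_def algebra_simps)
  finally show ?thesis unfolding Let_def \<delta>_def[symmetric] \<theta>_def[symmetric] .
qed

end
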